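(* Let $G$ be a $2$-connected graph which is a spanning subgraph of an $\{a,b,c,d\}$-web, and let $X=\{a,b,c,d\}\subseteq V(G)$. If $G$ does not have a $W_4(X)$-minor, then $G$ does not have a $K_{2,4}(X)$-minor.
   Context: For a graph $H$, the graph $H^+=(H,F)$ is obtained by, for each triangle $T$ of $H$, adding a new clique $F_T$ of arbitrary size with every vertex of $F_T$ joined to every vertex of $T$ (and no other vertex of $H$). An $\{a,b,c,d\}$-web is a graph $H^+$ where $H$ is planar, its outer face is bounded by a $4$-cycle with vertex set $\{a,b,c,d\}$, every internal face is a triangle, and every triangle is a face. A spanning subgraph has the same vertex set. An $H$-model in $G$ is a family $\{G_x:x\in V(H)\}$ of pairwise vertex-disjoint connected subgraphs of $G$ such that for each $xy\in E(H)$ some vertex of $G_x$ is adjacent to some vertex of $G_y$; $G$ has an $H(X)$-minor w.r.t. injective $\pi:X\to V(H)$ if there is a model with $u\in V(G_{\pi(u)})$ for all $u\in X$. $W_4$ is a $4$-cycle (rim) plus a hub adjacent to all rim vertices; a $W_4(X)$-minor is one w.r.t. some $\pi$ sending $X$ to distinct rim vertices. $K_{2,4}$ has vertices $s_1,s_2,t_1,t_2,t_3,t_4$ and edges $s_it_j$; a $K_{2,4}(X)$-minor is one w.r.t. some $\pi$ sending $X$ to distinct vertices of $\{t_1,t_2,t_3,t_4\}$. *)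

theory Defs
  imports "HOL-Analysis.Analysis"
begin

definition graph :: "'a set \<Rightarrow> 'a set set \<Rightarrow> bool" where
  "graph V E \<longleftrightarrow> finite V \<and>
     (\<forall>e\<in>E. \<exists>u v. u \<in> V \<and> v \<in> V \<and> u \<noteq> v \<and> e = {u, v})"

definition connected_on :: "'a set set \<Rightarrow> 'a set \<Rightarrow> bool" where
  "connected_on E S \<longleftrightarrow> S \<noteq> {} \<and>
     (\<forall>u\<in>S. \<forall>v\<in>S. (\<lambda>x y. x \<in> S \<and> y \<in> S \<and> {x, y} \<in> E)\<^sup>*\<^sup>* u v)"

definition two_connected :: "'a set \<Rightarrow> 'a set set \<Rightarrow> bool" where
  "two_connected V E \<longleftrightarrow> graph V E \<and> card V \<ge> 3 \<and> connected_on E V \<and>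
     (\<forall>v\<in>V. connected_on E (V - {v}))"

definition triangle :: "'a set set \<Rightarrow> 'a set \<Rightarrow> bool" where
  "triangle E T \<longleftrightarrow> (\<exists>x y z. T = {x, y, z} \<and> x \<noteq> y \<and> y \<noteq> z \<and> x \<noteq> z \<and>
      {x, y} \<in> E \<and> {y, z} \<in> E \<and> {x, z} \<in> E)"

definition tri_edges :: "'a set \<Rightarrow> 'a set set" where
  "tri_edges T = {e. e \<subseteq> T \<and> card e = 2}"

definition plane_embedding ::
  "'a set \<Rightarrow> 'a set set \<Rightarrow> ('a \<Rightarrow> complex) \<Rightarrow> ('a set \<Rightarrow> real \<Rightarrow> complex) \<Rightarrow> bool" where
  "plane_embedding V E p g \<longleftrightarrow> inj_on p V \<and>
     (\<forall>e\<in>E. arc (g e) \<and> {pathstart (g e), pathfinish (g e)} = p ` e) \<and>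
     (\<forall>e\<in>E. \<forall>e'\<in>E. e \<noteq> e' \<longrightarrow> path_image (g e) \<inter> path_image (g e') \<subseteq> p ` (e \<inter> e')) \<and>
     (\<forall>e\<in>E. \<forall>v\<in>V. v \<notin> e \<longrightarrow> p v \<notin> path_image (g e))"

definition drawing ::
  "('a \<Rightarrow> complex) \<Rightarrow> ('a set \<Rightarrow> real \<Rightarrow> complex) \<Rightarrow> 'a set \<Rightarrow> 'a set set \<Rightarrow> complex set" where
  "drawing p g S D = p ` S \<union> (\<Union>e\<in>D. path_image (g e))"

definition web_base :: "'a set \<Rightarrow> 'a set set \<Rightarrow> 'a \<Rightarrow> 'a \<Rightarrow> 'a \<Rightarrow> 'a \<Rightarrow> bool" where
  "web_base VH EH a b c d \<longleftrightarrow> graph VH EH \<and>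
    (\<exists>p g. plane_embedding VH EH p g \<and>
       (\<exists>w x y z. {w, x, y, z} = {a, b, c, d} \<and> card {a, b, c, d} = 4 \<and>
          {{w, x}, {x, y}, {y, z}, {z, w}} \<subseteq> EH \<and>
          (\<exists>f\<in>components (- drawing p g VH EH). \<not> bounded f \<and>
              frontier f = drawing p g {a, b, c, d} {{w, x}, {x, y}, {y, z}, {z, w}})) \<and>
       (\<forall>f\<in>components (- drawing p g VH EH). bounded f \<longrightarrow>
          (\<exists>T. triangle EH T \<and> frontier f = drawing p g T (tri_edges T))) \<and>
       (\<forall>T. triangle EH T \<longrightarrow>
          (\<exists>f\<in>components (- drawing p g VH EH). frontier f = drawing p g T (tri_edges T))))"

text \<open>(V,E) is an {a,b,c,d}-web H^+: for each triangle T of H a new (possibly empty) clique F T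
  is added, completely joined to T and to no other vertex of H.\<close>
definition web :: "'a set \<Rightarrow> 'a set set \<Rightarrow> 'a \<Rightarrow> 'a \<Rightarrow> 'a \<Rightarrow> 'a \<Rightarrow> bool" where
  "web V E a b c d \<longleftrightarrow> (\<exists>VH EH F. web_base VH EH a b c d \<and>
     (\<forall>T. triangle EH T \<longrightarrow> finite (F T) \<and> F T \<inter> VH = {}) \<and>
     (\<forall>T T'. triangle EH T \<longrightarrow> triangle EH T' \<longrightarrow> T \<noteq> T' \<longrightarrow> F T \<inter> F T' = {}) \<and>
     V = VH \<union> (\<Union>T\<in>{T. triangle EH T}. F T) \<and>
     E = EH \<union> (\<Union>T\<in>{T. triangle EH T}.
            {{u, v} | u v. u \<in> F T \<and> v \<in> F T \<and> u \<noteq> v} \<union> {{u, t} | u t. u \<in> F T \<and> t \<in> T}))"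

definition model :: "'a set \<Rightarrow> 'a set set \<Rightarrow> 'h set \<Rightarrow> 'h set set \<Rightarrow> ('h \<Rightarrow> 'a set) \<Rightarrow> bool" where
  "model V E VH EH B \<longleftrightarrow>
     (\<forall>x\<in>VH. B x \<subseteq> V \<and> connected_on E (B x)) \<and>
     (\<forall>x\<in>VH. \<forall>y\<in>VH. x \<noteq> y \<longrightarrow> B x \<inter> B y = {}) \<and>
     (\<forall>x y. {x, y} \<in> EH \<longrightarrow> (\<exists>u\<in>B x. \<exists>v\<in>B y. {u, v} \<in> E))"

definition rooted_minor ::
  "'a set \<Rightarrow> 'a set set \<Rightarrow> 'h set \<Rightarrow> 'h set set \<Rightarrow> 'a set \<Rightarrow> ('a \<Rightarrow> 'h) \<Rightarrow> bool" where
  "rooted_minor V E VH EH X \<pi> \<longleftrightarrow> inj_on \<pi> X \<and> \<pi> ` X \<subseteq> VH \<and>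
     (\<exists>B. model V E VH EH B \<and> (\<forall>u\<in>X. u \<in> B (\<pi> u)))"

text \<open>W4: hub 0, rim 1,2,3,4 (in cyclic order).\<close>
definition W4_V :: "nat set" where "W4_V = {0..4}"
definition W4_E :: "nat set set" where
  "W4_E = {{1,2},{2,3},{3,4},{4,1},{0,1},{0,2},{0,3},{0,4}}"

definition has_W4_minor :: "'a set \<Rightarrow> 'a set set \<Rightarrow> 'a set \<Rightarrow> bool" where
  "has_W4_minor V E X \<longleftrightarrow> (\<exists>\<pi>. \<pi> ` X \<subseteq> {1..4} \<and> rooted_minor V E W4_V W4_E X \<pi>)"

text \<open>K_{2,4}: s1 = 0, s2 = 1, t1..t4 = 2..5.\<close>
definition K24_V :: "nat set" where "K24_V = {0..5}"
definition K24_E :: "nat set set" where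
  "K24_E = {{s, t} | s t. s \<in> {0, 1} \<and> t \<in> {2..5}}"

definition has_K24_minor :: "'a set \<Rightarrow> 'a set set \<Rightarrow> 'a set \<Rightarrow> bool" where
  "has_K24_minor V E X \<longleftrightarrow> (\<exists>\<pi>. \<pi> ` X \<subseteq> {2..5} \<and> rooted_minor V E K24_V K24_E X \<pi>)"

end

theory Submission
  imports Defs "HOL-Library.Transitive_Closure_Table"
begin


lemma arc_mid_notin:
  assumes "arc g" "t \<in> {0<..<1}"
  shows "g t \<noteq> pathstart g" "g t \<noteq> pathfinish g"
proof -
  have i: "inj_on g {0..1}" using assms(1) by (simp add: arc_def)
  have t: "t \<in> {0..1}" "t \<noteq> 0" "t \<noteq> 1" using assms(2) by auto
  show "g t \<noteq> pathstart g" unfolding pathstart_def using inj_onD[OF i _ t(1)] t by force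
  show "g t \<noteq> pathfinish g" unfolding pathfinish_def using inj_onD[OF i _ t(1)] t by force
qed

lemma crossing:
  fixes c1 c2 q1 q2 :: "real \<Rightarrow> complex"
  assumes "arc c1" "arc c2" "arc q1" "arc q2"
    and "pathstart c1 = A" "pathfinish c1 = B" "pathstart c2 = A" "pathfinish c2 = B"
    and "pathstart q1 = A" "pathfinish q1 = B" "A \<noteq> B"
    and c12: "path_image c1 \<inter> path_image c2 = {A,B}"
    and c1q: "path_image c1 \<inter> path_image q1 = {A,B}"
    and c2q: "path_image c2 \<inter> path_image q1 = {A,B}"
    and q2: "pathstart q2 = X" "pathfinish q2 = Z"
    and X: "X \<in> path_image c1" "X \<notin> {A,B}" and Z: "Z \<in> path_image c2" "Z \<notin> {A,B}"
    and qq: "path_image q1 \<inter> path_image q2 = {}"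
    and q2in: "path_image q2 - {X,Z} \<subseteq> inside(path_image c1 \<union> path_image c2)"
    and q1in: "path_image q1 - {A,B} \<subseteq> inside(path_image c1 \<union> path_image c2)"
  shows False
proof -
  let ?I = "inside(path_image c1 \<union> path_image c2)"
  have h: "(1/2::real) \<in> {0<..<1}" by simp
  have "q1 (1/2) \<in> path_image q1" unfolding path_image_def by auto
  moreover have "q1 (1/2) \<notin> {A,B}" using arc_mid_notin[OF assms(3) h] assms by auto
  ultimately have ne: "path_image q1 \<inter> ?I \<noteq> {}" using q1in by blast
  obtain I1: "inside(path_image c1 \<union> path_image q1) \<inter> inside(path_image c2 \<union> path_image q1) = {}"
     and I2: "inside(path_image c1 \<union> path_image q1) \<union> inside(path_image c2 \<union> path_image q1) \<union>
           (path_image q1 - {A,B}) = ?I"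
    by (rule split_inside_simple_closed_curve[of c1 A B c2 q1])
       (use assms ne in \<open>auto intro: arc_imp_simple_path\<close>)
  define J1 where "J1 = inside(path_image c1 \<union> path_image q1)"
  define J2 where "J2 = inside(path_image c2 \<union> path_image q1)"
  have oJ1: "open J1" unfolding J1_def
    by (intro open_inside closed_Un compact_imp_closed compact_path_image arc_imp_path assms)
  have oJ2: "open J2" unfolding J2_def
    by (intro open_inside closed_Un compact_imp_closed compact_path_image arc_imp_path assms)
  define M where "M = q2 ` {0<..<1}"
  have pq2: "path q2" using assms arc_imp_path by auto
  have cM: "connected M" unfolding M_def
    by (rule connected_continuous_image[OF continuous_on_subset[OF pq2[unfolded path_def]]]) auto
  have Msub: "M \<subseteq> path_image q2 - {X,Z}"
    using arc_mid_notin[OF assms(4)] q2 unfolding M_def path_image_def by auto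
  have MJ: "M \<subseteq> J1 \<union> J2"
  proof
    fix m assume "m \<in> M"
    then have "m \<in> ?I" "m \<notin> path_image q1" using Msub q2in qq by auto
    then show "m \<in> J1 \<union> J2" using I2 unfolding J1_def J2_def by blast
  qed
  have cl: "X \<in> closure M \<and> Z \<in> closure M"
  proof -
    have "q2 ` closure {0<..<1::real} \<subseteq> closure M"
      by (rule image_closure_subset) (use pq2 in \<open>auto simp: path_def M_def intro!: closure_subset[THEN subsetD]\<close>)
    then show ?thesis using q2 unfolding pathstart_def pathfinish_def by auto
  qed
  have Zc1: "Z \<notin> path_image c1" using Z c12 by blast
  have Xc2: "X \<notin> path_image c2" using X c12 by blast
  have Xq1: "X \<notin> path_image q1" "Z \<notin> path_image q1" using qq q2 pathstart_in_path_image pathfinish_in_path_image by blast+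
  have XI: "X \<notin> ?I" "Z \<notin> ?I" using X Z inside_no_overlap by blast+
  have cc: "closed (path_image c1 \<union> path_image q1)" "closed (path_image c2 \<union> path_image q1)"
    by (intro closed_Un compact_imp_closed compact_path_image arc_imp_path assms)+
  from connectedD[OF cM oJ1 oJ2] I1 MJ have "J1 \<inter> M = {} \<or> J2 \<inter> M = {}"
    unfolding J1_def J2_def by blast
  then show False
  proof
    assume "J1 \<inter> M = {}"
    then have "M \<subseteq> J2" using MJ by blast
    then have "X \<in> closure J2" using cl closure_mono by blast
    then have "X \<in> J2 \<union> (path_image c2 \<union> path_image q1)"
      using closure_Un_frontier[of J2] frontier_inside_subset[OF cc(2)] unfolding J2_def by blast
    then show False using Xc2 Xq1 XI I2 unfolding J2_def by blast
  next
    assume "J2 \<inter> M = {}"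
    then have "M \<subseteq> J1" using MJ by blast
    then have "Z \<in> closure J1" using cl closure_mono by blast
    then have "Z \<in> J1 \<union> (path_image c1 \<union> path_image q1)"
      using closure_Un_frontier[of J1] frontier_inside_subset[OF cc(1)] unfolding J1_def by blast
    then show False using Zc1 Xq1 XI I2 unfolding J1_def by blast
  qed
qed




definition oe :: "('a \<Rightarrow> complex) \<Rightarrow> ('a set \<Rightarrow> real \<Rightarrow> complex) \<Rightarrow> 'a \<Rightarrow> 'a \<Rightarrow> real \<Rightarrow> complex" where
  "oe p g u v = (if pathstart (g {u,v}) = p u then g {u,v} else reversepath (g {u,v}))"

lemma oe_props:
  assumes pe: "plane_embedding VH EH p g" and e: "{u,v} \<in> EH" "u \<in> VH" "v \<in> VH" "u \<noteq> v"
  shows "arc (oe p g u v) \<and> pathstart (oe p g u v) = p u \<and> pathfinish (oe p g u v) = p v \<and>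
         path_image (oe p g u v) = path_image (g {u,v})"
proof -
  have a: "arc (g {u,v})" and se: "{pathstart (g {u,v}), pathfinish (g {u,v})} = {p u, p v}"
    using pe e unfolding plane_embedding_def by auto
  have ne: "p u \<noteq> p v" using pe e unfolding plane_embedding_def inj_on_def by auto
  show ?thesis
  proof (cases "pathstart (g {u,v}) = p u")
    case True
    then have "pathfinish (g {u,v}) = p v" using se ne by (metis doubleton_eq_iff)
    then show ?thesis using True a unfolding oe_def by simp
  next
    case False
    then have "pathstart (g {u,v}) = p v" "pathfinish (g {u,v}) = p u" using se ne by (metis doubleton_eq_iff)+
    then show ?thesis using False a unfolding oe_def by (simp add: arc_reversepath)
  qed
qed

fun pe :: "'a \<Rightarrow> 'a list \<Rightarrow> 'a set set" where
  "pe x [] = {}"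
| "pe x (y # ys) = insert {x,y} (pe y ys)"

lemma pe_sub:
  assumes "rtrancl_path R x xs y" "e \<in> pe x xs"
  shows "\<exists>u v. e = {u,v} \<and> R u v \<and> u \<in> set (x # xs) \<and> v \<in> set (x # xs)"
  using assms by (induction arbitrary: e rule: rtrancl_path.induct) (auto, metis)

lemma crossE:
  assumes "plane_embedding VH EH p g" "e \<in> EH" "e' \<in> EH" "e \<noteq> e'"
  shows "path_image (g e) \<inter> path_image (g e') \<subseteq> p ` (e \<inter> e')"
  using assms unfolding plane_embedding_def by simp

lemma path_arc:
  assumes pemb: "plane_embedding VH EH p g" and gr: "graph VH EH"
    and rp: "rtrancl_path R x xs y" and d: "distinct (x # xs)" and ne: "xs \<noteq> []"
    and RE: "\<And>a b. R a b \<Longrightarrow> {a,b} \<in> EH"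
  shows "\<exists>\<gamma>. arc \<gamma> \<and> pathstart \<gamma> = p x \<and> pathfinish \<gamma> = p y \<and>
            path_image \<gamma> = (\<Union>e\<in>pe x xs. path_image (g e))"
  using rp d ne
proof (induction rule: rtrancl_path.induct)
  case (base x)
  then show ?case by simp
next
  case (step x y ys z)
  have xy: "{x,y} \<in> EH" using RE step by auto
  then obtain u v where "u \<in> VH" "v \<in> VH" "{x,y} = {u,v}" using gr unfolding graph_def by blast
  then have inV: "x \<in> VH" "y \<in> VH" by (auto simp: doubleton_eq_iff)
  have xny: "x \<noteq> y" using step.prems by auto
  note o = oe_props[OF pemb xy inV xny]
  show ?case
  proof (cases "ys = []")
    case True
    then have "z = y" using step.hyps(2) by (auto elim: rtrancl_path.cases)
    then show ?thesis using o True by (intro exI[of _ "oe p g x y"]) simp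
  next
    case False
    obtain \<gamma> where g: "arc \<gamma>" "pathstart \<gamma> = p y" "pathfinish \<gamma> = p z"
       "path_image \<gamma> = (\<Union>e\<in>pe y ys. path_image (g e))"
      using step.IH step.prems False by (meson distinct.simps(2))
    have disj: "path_image (oe p g x y) \<inter> path_image \<gamma> \<subseteq> {pathstart \<gamma>}"
    proof
      fix q assume q: "q \<in> path_image (oe p g x y) \<inter> path_image \<gamma>"
      then obtain e where e: "e \<in> pe y ys" "q \<in> path_image (g e)" using g by blast
      obtain u v where uv: "e = {u,v}" "R u v" "u \<in> set (y # ys)" "v \<in> set (y # ys)"
        using pe_sub[OF step.hyps(2) e(1)] by blast
      have eE: "e \<in> EH" using uv RE by auto
      have "x \<notin> set (y # ys)" using step.prems by simp
      then have xn: "x \<notin> e" using uv by blast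
      have ne2: "e \<noteq> {x,y}"
      proof
        assume "e = {x,y}" then have "x \<in> e" by simp
        then show False using xn by contradiction
      qed
      have cr: "path_image (g {x,y}) \<inter> path_image (g e) \<subseteq> p ` ({x,y} \<inter> e)"
        using crossE[OF pemb xy eE] ne2 by metis
      have "q \<in> path_image (g {x,y})" using q o by simp
      then have "q \<in> p ` ({x,y} \<inter> e)" using cr e(2) by blast
      then show "q \<in> {pathstart \<gamma>}" using xn g(2) by auto
    qed
    have "arc (oe p g x y +++ \<gamma>)" by (rule arc_join) (use o g disj in simp_all)
    moreover have "path_image (oe p g x y +++ \<gamma>) = (\<Union>e\<in>pe x (y # ys). path_image (g e))"
      using o g by (simp add: path_image_join)
    ultimately show ?thesis using o g by (intro exI[of _ "oe p g x y +++ \<gamma>"]) simp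
  qed
qed




lemma face_inside:
  fixes D K f :: "complex set"
  assumes f: "f \<in> components (- D)" "\<not> bounded f" "frontier f = K"
    and K: "bounded K" "K \<subseteq> D" and q: "q \<in> D" "q \<notin> K"
  shows "q \<in> inside K"
proof (rule ccontr)
  assume "q \<notin> inside K"
  then have qo: "q \<in> outside K" using q inside_Un_outside by blast
  have fD: "f \<subseteq> - D" using f(1) in_components_subset by blast
  then have fK: "f \<subseteq> - K" using K by blast
  have "f \<inter> outside K \<noteq> {}"
  proof
    assume "f \<inter> outside K = {}"
    then have "f \<subseteq> inside K" using fK inside_Un_outside by blast
    then show False using bounded_inside[OF K(1)] f(2) bounded_subset by blast
  qed
  moreover have "outside K - f \<noteq> {}" using qo q fD by blast
  moreover have "connected (outside K)" by (rule connected_outside) (use K in auto)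
  ultimately have "outside K \<inter> frontier f \<noteq> {}" using connected_Int_frontier by blast
  then show False using f(3) outside_no_overlap by blast
qed




lemma tri_props:
  assumes "graph VH EH" "triangle EH T"
  shows "T \<subseteq> VH" "\<And>t t'. t \<in> T \<Longrightarrow> t' \<in> T \<Longrightarrow> t \<noteq> t' \<Longrightarrow> {t,t'} \<in> EH"
proof -
  obtain x y z where T: "T = {x,y,z}" "x \<noteq> y" "y \<noteq> z" "x \<noteq> z" "{x,y} \<in> EH" "{y,z} \<in> EH" "{x,z} \<in> EH"
    using assms(2) unfolding triangle_def by blast
  have ed: "\<And>u v. {u,v} \<in> EH \<Longrightarrow> u \<in> VH \<and> v \<in> VH"
  proof -
    fix u v assume "{u,v} \<in> EH"
    then obtain a b where "a \<in> VH" "b \<in> VH" "{u,v} = {a,b}" using assms(1) unfolding graph_def by blast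
    then show "u \<in> VH \<and> v \<in> VH" by (auto simp: doubleton_eq_iff)
  qed
  show "T \<subseteq> VH" using ed T by auto
  fix t t' assume "t \<in> T" "t' \<in> T" "t \<noteq> t'"
  then show "{t,t'} \<in> EH" using T by (auto simp: insert_commute)
qed

lemma edge_cases:
  assumes EW: "EW = EH \<union> (\<Union>T\<in>{T. triangle EH T}.
            {{u, v} | u v. u \<in> F T \<and> v \<in> F T \<and> u \<noteq> v} \<union> {{u, t} | u t. u \<in> F T \<and> t \<in> T})"
    and e: "{v,v'} \<in> EW"
  shows "{v,v'} \<in> EH \<or> (\<exists>T. triangle EH T \<and> v \<in> F T \<and> v' \<in> F T) \<or>
         (\<exists>T. triangle EH T \<and> v \<in> F T \<and> v' \<in> T) \<or> (\<exists>T. triangle EH T \<and> v' \<in> F T \<and> v \<in> T)"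
proof -
  have "{v,v'} \<in> EH \<or> (\<exists>T. triangle EH T \<and> ({v,v'} \<in> {{u, w} | u w. u \<in> F T \<and> w \<in> F T \<and> u \<noteq> w} \<or>
      {v,v'} \<in> {{u, t} | u t. u \<in> F T \<and> t \<in> T}))"
    using e unfolding EW by blast
  then show ?thesis
  proof
    assume "\<exists>T. triangle EH T \<and> ({v,v'} \<in> {{u, w} | u w. u \<in> F T \<and> w \<in> F T \<and> u \<noteq> w} \<or>
      {v,v'} \<in> {{u, t} | u t. u \<in> F T \<and> t \<in> T})"
    then obtain T where T: "triangle EH T" and "{v,v'} \<in> {{u, w} | u w. u \<in> F T \<and> w \<in> F T \<and> u \<noteq> w} \<or>
      {v,v'} \<in> {{u, t} | u t. u \<in> F T \<and> t \<in> T}" by blast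
    then show ?thesis
    proof (elim disjE)
      assume "{v,v'} \<in> {{u, w} | u w. u \<in> F T \<and> w \<in> F T \<and> u \<noteq> w}"
      then obtain u w where "{v,v'} = {u,w}" "u \<in> F T" "w \<in> F T" by blast
      then have "v \<in> F T \<and> v' \<in> F T" by (auto simp: doubleton_eq_iff)
      then show ?thesis using T by blast
    next
      assume "{v,v'} \<in> {{u, t} | u t. u \<in> F T \<and> t \<in> T}"
      then obtain u t where "{v,v'} = {u,t}" "u \<in> F T" "t \<in> T" by blast
      then have "(v \<in> F T \<and> v' \<in> T) \<or> (v' \<in> F T \<and> v \<in> T)" by (auto simp: doubleton_eq_iff)
      then show ?thesis using T by blast
    qed
  qed simp
qed

lemma reach_H:
  assumes gr: "graph VH EH"
    and Fd: "\<forall>T. triangle EH T \<longrightarrow> finite (F T) \<and> F T \<inter> VH = {}"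
    and Fdis: "\<forall>T T'. triangle EH T \<longrightarrow> triangle EH T' \<longrightarrow> T \<noteq> T' \<longrightarrow> F T \<inter> F T' = {}"
    and EW: "EW = EH \<union> (\<Union>T\<in>{T. triangle EH T}.
            {{u, v} | u v. u \<in> F T \<and> v \<in> F T \<and> u \<noteq> v} \<union> {{u, t} | u t. u \<in> F T \<and> t \<in> T})"
    and EE: "E \<subseteq> EW"
    and SV: "S \<subseteq> VH \<union> (\<Union>T\<in>{T. triangle EH T}. F T)"
    and r: "(\<lambda>x y. x \<in> S \<and> y \<in> S \<and> {x, y} \<in> E)\<^sup>*\<^sup>* u v"
    and u: "u \<in> VH"
  shows "(v \<in> VH \<longrightarrow> (\<lambda>x y. x \<in> S \<inter> VH \<and> y \<in> S \<inter> VH \<and> {x, y} \<in> EH)\<^sup>*\<^sup>* u v) \<and>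
         (\<forall>T. triangle EH T \<and> v \<in> F T \<longrightarrow>
             (\<exists>t\<in>T \<inter> S. (\<lambda>x y. x \<in> S \<inter> VH \<and> y \<in> S \<inter> VH \<and> {x, y} \<in> EH)\<^sup>*\<^sup>* u t))"
  using r
proof (induction rule: rtranclp_induct)
  case base
  then show ?case using u Fd by blast
next
  case (step v v')
  let ?R = "\<lambda>x y. x \<in> S \<inter> VH \<and> y \<in> S \<inter> VH \<and> {x, y} \<in> EH"
  have vS: "v \<in> S" "v' \<in> S" and e: "{v,v'} \<in> EW" using step.hyps(2) EE by auto
  have cls: "{v,v'} \<in> EH \<or> (\<exists>T. triangle EH T \<and> v \<in> F T \<and> v' \<in> F T) \<or>
         (\<exists>T. triangle EH T \<and> v \<in> F T \<and> v' \<in> T) \<or> (\<exists>T. triangle EH T \<and> v' \<in> F T \<and> v \<in> T)"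
    by (rule edge_cases[OF EW e])
  have EHV: "\<And>a b. {a,b} \<in> EH \<Longrightarrow> a \<in> VH \<and> b \<in> VH"
  proof -
    fix a b assume "{a,b} \<in> EH"
    then obtain c d where "c \<in> VH" "d \<in> VH" "{a,b} = {c,d}" using gr unfolding graph_def by blast
    then show "a \<in> VH \<and> b \<in> VH" by (auto simp: doubleton_eq_iff)
  qed
  have FV: "\<And>T w. triangle EH T \<Longrightarrow> w \<in> F T \<Longrightarrow> w \<notin> VH" using Fd by blast
  have Funi: "\<And>T T' w. triangle EH T \<Longrightarrow> triangle EH T' \<Longrightarrow> w \<in> F T \<Longrightarrow> w \<in> F T' \<Longrightarrow> T = T'"
    using Fdis by blast
  have part1: "v' \<in> VH \<longrightarrow> ?R\<^sup>*\<^sup>* u v'"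
  proof
    assume v'V: "v' \<in> VH"
    show "?R\<^sup>*\<^sup>* u v'"
    proof (cases "v \<in> VH")
      case True
      have "{v,v'} \<in> EH" using cls True v'V FV by blast
      then have Rv: "?R v v'" using True v'V vS by blast
      have "?R\<^sup>*\<^sup>* u v" using step.IH True by blast
      then show ?thesis using Rv by (rule rtranclp.rtrancl_into_rtrancl)
    next
      case False
      then obtain T where T: "triangle EH T" "v \<in> F T" using vS SV by blast
      have v'T: "v' \<in> T"
      proof -
        from cls show ?thesis
        proof (elim disjE exE conjE)
          assume "{v,v'} \<in> EH" then show ?thesis using EHV False by blast
        next
          fix T' assume "triangle EH T'" "v \<in> F T'" "v' \<in> F T'"
          then show ?thesis using FV v'V by blast
        next
          fix T' assume T': "triangle EH T'" "v \<in> F T'" "v' \<in> T'"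
          then show ?thesis using Funi[OF T(1) T'(1) T(2)] by blast
        next
          fix T' assume T': "triangle EH T'" "v' \<in> F T'" "v \<in> T'"
          then show ?thesis using FV v'V by blast
        qed
      qed
      obtain t where t: "t \<in> T \<inter> S" "?R\<^sup>*\<^sup>* u t" using step.IH T by blast
      show ?thesis
      proof (cases "t = v'")
        case True then show ?thesis using t by simp
      next
        case False
        have "{t,v'} \<in> EH" using tri_props(2)[OF gr T(1)] t(1) v'T False by blast
        moreover have "t \<in> VH" using tri_props(1)[OF gr T(1)] t(1) by blast
        ultimately have "?R t v'" using t(1) vS v'V by blast
        with t(2) show ?thesis by (rule rtranclp.rtrancl_into_rtrancl)
      qed
    qed
  qed
  have part2: "\<forall>T. triangle EH T \<and> v' \<in> F T \<longrightarrow> (\<exists>t\<in>T \<inter> S. ?R\<^sup>*\<^sup>* u t)"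
  proof (intro allI impI, elim conjE)
    fix T assume T: "triangle EH T" "v' \<in> F T"
    have v'n: "v' \<notin> VH" using FV T by blast
    show "\<exists>t\<in>T \<inter> S. ?R\<^sup>*\<^sup>* u t"
    proof (cases "v \<in> VH")
      case True
      have "v \<in> T"
      proof -
        from cls show ?thesis
        proof (elim disjE exE conjE)
          assume "{v,v'} \<in> EH" then show ?thesis using EHV v'n by blast
        next
          fix T' assume "triangle EH T'" "v \<in> F T'" "v' \<in> F T'"
          then show ?thesis using FV True by blast
        next
          fix T' assume T': "triangle EH T'" "v \<in> F T'" "v' \<in> T'"
          then show ?thesis using FV True by blast
        next
          fix T' assume T': "triangle EH T'" "v' \<in> F T'" "v \<in> T'"
          then show ?thesis using Funi[OF T(1) T'(1) T(2)] by blast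
        qed
      qed
      then show ?thesis using step.IH True vS by blast
    next
      case False
      then obtain T0 where T0: "triangle EH T0" "v \<in> F T0" using vS SV by blast
      have "T0 = T"
      proof -
        from cls show ?thesis
        proof (elim disjE exE conjE)
          assume "{v,v'} \<in> EH" then show ?thesis using EHV v'n by blast
        next
          fix T' assume T': "triangle EH T'" "v \<in> F T'" "v' \<in> F T'"
          then show ?thesis using Funi[OF T0(1) T'(1) T0(2)] Funi[OF T(1) T'(1) T(2)] by blast
        next
          fix T' assume T': "triangle EH T'" "v \<in> F T'" "v' \<in> T'"
          then show ?thesis using tri_props(1)[OF gr T'(1)] v'n by blast
        next
          fix T' assume T': "triangle EH T'" "v' \<in> F T'" "v \<in> T'"
          then show ?thesis using tri_props(1)[OF gr T'(1)] False by blast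
        qed
      qed
      then show ?thesis using step.IH T0 by blast
    qed
  qed
  show ?case using part1 part2 by blast
qed




lemma hit:
  assumes "plane_embedding VH EH p g" "e \<in> EH" "e' \<in> EH" "x \<in> e'" "x \<notin> e"
    "r \<in> path_image (g e)" "r \<in> path_image (g e')"
  shows "r \<in> p ` (e' - {x})"
proof -
  have "e \<noteq> e'" using assms by blast
  then have "path_image (g e) \<inter> path_image (g e') \<subseteq> p ` (e \<inter> e')" by (rule crossE[OF assms(1-3)])
  then have "r \<in> p ` (e \<inter> e')" using assms by blast
  then show ?thesis using assms(5) by blast
qed

lemma conn_mono:
  assumes "connected_on E A" "A \<subseteq> S" "u \<in> A" "v \<in> A"
  shows "(\<lambda>x y. x \<in> S \<and> y \<in> S \<and> {x, y} \<in> E)\<^sup>*\<^sup>* u v"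
proof -
  have "(\<lambda>x y. x \<in> A \<and> y \<in> A \<and> {x, y} \<in> E)\<^sup>*\<^sup>* u v" using assms unfolding connected_on_def by blast
  then show ?thesis by (rule rtranclp_mono[THEN predicate2D, rotated]) (use assms(2) in blast)
qed

lemma chain3:
  assumes "connected_on E A1" "connected_on E A2" "connected_on E A3"
    and "A1 \<subseteq> S" "A2 \<subseteq> S" "A3 \<subseteq> S"
    and e1: "\<exists>u\<in>A1. \<exists>v\<in>A2. {u,v} \<in> E" and e2: "\<exists>u\<in>A2. \<exists>v\<in>A3. {u,v} \<in> E"
    and "s \<in> A1" "t \<in> A3"
  shows "(\<lambda>x y. x \<in> S \<and> y \<in> S \<and> {x, y} \<in> E)\<^sup>*\<^sup>* s t"
proof -
  let ?R = "\<lambda>x y. x \<in> S \<and> y \<in> S \<and> {x, y} \<in> E"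
  obtain u1 v1 where 1: "u1 \<in> A1" "v1 \<in> A2" "{u1,v1} \<in> E" using e1 by blast
  obtain u2 v2 where 2: "u2 \<in> A2" "v2 \<in> A3" "{u2,v2} \<in> E" using e2 by blast
  have a1: "?R\<^sup>*\<^sup>* s u1" by (rule conn_mono[OF assms(1) assms(4) assms(9) 1(1)])
  have a2: "?R u1 v1" using 1 assms(4,5) by blast
  have a3: "?R\<^sup>*\<^sup>* v1 u2" by (rule conn_mono[OF assms(2) assms(5) 1(2) 2(1)])
  have a4: "?R u2 v2" using 2 assms(5,6) by blast
  have a5: "?R\<^sup>*\<^sup>* v2 t" by (rule conn_mono[OF assms(3) assms(6) 2(2) assms(10)])
  have "?R\<^sup>*\<^sup>* s v1" using a1 a2 by (rule rtranclp.rtrancl_into_rtrancl)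
  then have "?R\<^sup>*\<^sup>* s u2" using a3 by (rule rtranclp_trans)
  then have "?R\<^sup>*\<^sup>* s v2" using a4 by (rule rtranclp.rtrancl_into_rtrancl)
  then show ?thesis using a5 by (rule rtranclp_trans)
qed

lemma get_arc:
  assumes pemb: "plane_embedding VH EH p g" and gr: "graph VH EH"
    and r: "(\<lambda>x y. x \<in> S \<inter> VH \<and> y \<in> S \<inter> VH \<and> {x, y} \<in> EH)\<^sup>*\<^sup>* u v"
    and "u \<noteq> v"
  shows "\<exists>q. arc q \<and> pathstart q = p u \<and> pathfinish q = p v \<and>
            (\<forall>r\<in>path_image q. \<exists>e\<in>EH. e \<subseteq> S \<and> r \<in> path_image (g e))"
proof -
  let ?R = "\<lambda>x y. x \<in> S \<inter> VH \<and> y \<in> S \<inter> VH \<and> {x, y} \<in> EH"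
  have "\<exists>xs. rtrancl_path ?R u xs v" using r by (simp only: rtranclp_eq_rtrancl_path)
  then obtain xs where "rtrancl_path ?R u xs v" by blast
  then obtain xs' where xs': "rtrancl_path ?R u xs' v" "distinct (u # xs')"
    by (rule rtrancl_path_distinct)
  have ne: "xs' \<noteq> []"
  proof
    assume "xs' = []"
    with xs'(1) have "rtrancl_path ?R u [] v" by simp
    then have "u = v" by (cases rule: rtrancl_path.cases) simp_all
    then show False using assms(4) by contradiction
  qed
  obtain q where q: "arc q" "pathstart q = p u" "pathfinish q = p v"
      "path_image q = (\<Union>e\<in>pe u xs'. path_image (g e))"
    using path_arc[OF pemb gr xs'(1) xs'(2) ne] by blast
  have "\<forall>r\<in>path_image q. \<exists>e\<in>EH. e \<subseteq> S \<and> r \<in> path_image (g e)"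
  proof
    fix r assume "r \<in> path_image q"
    then obtain e where e: "e \<in> pe u xs'" "r \<in> path_image (g e)" using q by blast
    obtain a b where ab: "e = {a,b}" and Rab: "?R a b" using pe_sub[OF xs'(1) e(1)] by blast
    from Rab have "{a,b} \<in> EH" "a \<in> S" "b \<in> S" by simp_all
    then have "e \<in> EH" "e \<subseteq> S" using ab by simp_all
    then show "\<exists>e\<in>EH. e \<subseteq> S \<and> r \<in> path_image (g e)" using e(2) by blast
  qed
  then show ?thesis using q by blast
qed

lemma card4_distinct:
  assumes "card {w,x,y,z} = 4"
  shows "w \<noteq> x" "w \<noteq> y" "w \<noteq> z" "x \<noteq> y" "x \<noteq> z" "y \<noteq> z"
  using assms by (auto simp: card_insert_if split: if_splits)




theorem mainTheorem18:
  fixes V :: "'a set" and E :: "'a set set" and VW :: "'a set" and EW :: "'a set set"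
    and a b c d :: 'a
  assumes "two_connected V E"
    and "web VW EW a b c d"
    and "V = VW" and "E \<subseteq> EW"
    and "\<not> has_W4_minor V E {a, b, c, d}"
  shows "\<not> has_K24_minor V E {a, b, c, d}"
proof
  assume K: "has_K24_minor V E {a, b, c, d}"
  obtain VH EH F where wb: "web_base VH EH a b c d"
    and Fd: "\<forall>T. triangle EH T \<longrightarrow> finite (F T) \<and> F T \<inter> VH = {}"
    and Fdis: "\<forall>T T'. triangle EH T \<longrightarrow> triangle EH T' \<longrightarrow> T \<noteq> T' \<longrightarrow> F T \<inter> F T' = {}"
    and VW: "VW = VH \<union> (\<Union>T\<in>{T. triangle EH T}. F T)"
    and EW: "EW = EH \<union> (\<Union>T\<in>{T. triangle EH T}.
            {{u, v} | u v. u \<in> F T \<and> v \<in> F T \<and> u \<noteq> v} \<union> {{u, t} | u t. u \<in> F T \<and> t \<in> T})"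
    using assms(2) unfolding web_def by blast
  have gr: "graph VH EH" using wb unfolding web_base_def by blast
  have wb2: "\<exists>p g. plane_embedding VH EH p g \<and>
       (\<exists>w x y z. {w, x, y, z} = {a, b, c, d} \<and> card {a, b, c, d} = 4 \<and>
          {{w, x}, {x, y}, {y, z}, {z, w}} \<subseteq> EH \<and>
          (\<exists>f\<in>components (- drawing p g VH EH). \<not> bounded f \<and>
              frontier f = drawing p g {a, b, c, d} {{w, x}, {x, y}, {y, z}, {z, w}})) \<and>
       (\<forall>f\<in>components (- drawing p g VH EH). bounded f \<longrightarrow>
          (\<exists>T. triangle EH T \<and> frontier f = drawing p g T (tri_edges T))) \<and>
       (\<forall>T. triangle EH T \<longrightarrow>
          (\<exists>f\<in>components (- drawing p g VH EH). frontier f = drawing p g T (tri_edges T)))"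
    using wb unfolding web_base_def by (rule conjunct2)
  then obtain p g where P: "plane_embedding VH EH p g \<and>
       (\<exists>w x y z. {w, x, y, z} = {a, b, c, d} \<and> card {a, b, c, d} = 4 \<and>
          {{w, x}, {x, y}, {y, z}, {z, w}} \<subseteq> EH \<and>
          (\<exists>f\<in>components (- drawing p g VH EH). \<not> bounded f \<and>
              frontier f = drawing p g {a, b, c, d} {{w, x}, {x, y}, {y, z}, {z, w}})) \<and>
       (\<forall>f\<in>components (- drawing p g VH EH). bounded f \<longrightarrow>
          (\<exists>T. triangle EH T \<and> frontier f = drawing p g T (tri_edges T))) \<and>
       (\<forall>T. triangle EH T \<longrightarrow>
          (\<exists>f\<in>components (- drawing p g VH EH). frontier f = drawing p g T (tri_edges T)))"
    by (elim exE) (rule that)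
  have pemb: "plane_embedding VH EH p g" using P by (rule conjunct1)
  have outer: "\<exists>w x y z. {w, x, y, z} = {a, b, c, d} \<and> card {a, b, c, d} = 4 \<and>
          {{w, x}, {x, y}, {y, z}, {z, w}} \<subseteq> EH \<and>
          (\<exists>f\<in>components (- drawing p g VH EH). \<not> bounded f \<and>
              frontier f = drawing p g {a, b, c, d} {{w, x}, {x, y}, {y, z}, {z, w}})"
    using P by (rule conjunct1[OF conjunct2])
  obtain w x y z f where wxyz: "{w, x, y, z} = {a, b, c, d}" and c4: "card {a, b, c, d} = 4"
    and cyc: "{{w, x}, {x, y}, {y, z}, {z, w}} \<subseteq> EH"
    and f: "f \<in> components (- drawing p g VH EH)" "\<not> bounded f"
    and ff: "frontier f = drawing p g {a, b, c, d} {{w, x}, {x, y}, {y, z}, {z, w}}"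
    using outer by (elim exE conjE bexE) (rule that)
  have dist: "w \<noteq> x" "w \<noteq> y" "w \<noteq> z" "x \<noteq> y" "x \<noteq> z" "y \<noteq> z"
    using card4_distinct[of w x y z] c4 wxyz by simp_all
  have EHV: "\<And>u v. {u,v} \<in> EH \<Longrightarrow> u \<in> VH \<and> v \<in> VH"
  proof -
    fix u v assume "{u,v} \<in> EH"
    then obtain c d where "c \<in> VH" "d \<in> VH" "{u,v} = {c,d}" using gr unfolding graph_def by blast
    then show "u \<in> VH \<and> v \<in> VH" by (auto simp: doubleton_eq_iff)
  qed
  have ewx: "{w,x} \<in> EH" and exy: "{x,y} \<in> EH" and ewz: "{w,z} \<in> EH" and ezy: "{z,y} \<in> EH"
    using cyc by (auto simp: insert_commute)
  have inVH: "w \<in> VH" "x \<in> VH" "y \<in> VH" "z \<in> VH" using EHV ewx ezy by blast+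
  obtain \<pi> B where \<pi>: "\<pi> ` {a,b,c,d} \<subseteq> {2..5}" "inj_on \<pi> {a,b,c,d}"
    and mB: "model V E K24_V K24_E B" and Bin: "\<forall>u\<in>{a,b,c,d}. u \<in> B (\<pi> u)"
    using K unfolding has_K24_minor_def rooted_minor_def by blast
  have X: "w \<in> {a,b,c,d}" "x \<in> {a,b,c,d}" "y \<in> {a,b,c,d}" "z \<in> {a,b,c,d}"
    using wxyz by blast+
  have iK: "\<pi> w \<in> {2..5}" "\<pi> x \<in> {2..5}" "\<pi> y \<in> {2..5}" "\<pi> z \<in> {2..5}"
    using \<pi>(1) X by blast+
  have idist: "\<pi> w \<noteq> \<pi> x" "\<pi> w \<noteq> \<pi> y" "\<pi> w \<noteq> \<pi> z" "\<pi> x \<noteq> \<pi> y" "\<pi> x \<noteq> \<pi> z" "\<pi> y \<noteq> \<pi> z"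
    using \<pi>(2) X dist unfolding inj_on_def by metis+
  have inB: "w \<in> B (\<pi> w)" "x \<in> B (\<pi> x)" "y \<in> B (\<pi> y)" "z \<in> B (\<pi> z)" using Bin X by blast+
  have mB1: "\<And>i. i \<in> K24_V \<Longrightarrow> B i \<subseteq> V \<and> connected_on E (B i)"
    using mB unfolding model_def by blast
  have mB2: "\<And>i j. i \<in> K24_V \<Longrightarrow> j \<in> K24_V \<Longrightarrow> i \<noteq> j \<Longrightarrow> B i \<inter> B j = {}"
    using mB unfolding model_def by blast
  have mB3: "\<And>i j. {i,j} \<in> K24_E \<Longrightarrow> \<exists>u\<in>B i. \<exists>v\<in>B j. {u,v} \<in> E"
    using mB unfolding model_def by blast
  have KE: "\<And>s k. s \<in> {0,1} \<Longrightarrow> k \<in> {2..5} \<Longrightarrow> {s,k} \<in> K24_E \<and> {k,s} \<in> K24_E"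
  proof -
    fix s k :: nat assume "s \<in> {0,1}" "k \<in> {2..5}"
    then have "{s,k} \<in> K24_E" unfolding K24_E_def by blast
    then show "{s,k} \<in> K24_E \<and> {k,s} \<in> K24_E" by (simp add: insert_commute)
  qed
  have KV: "\<And>k. k \<in> {2..5} \<Longrightarrow> k \<in> K24_V" "(0::nat) \<in> K24_V" "(1::nat) \<in> K24_V"
    unfolding K24_V_def by auto
  define S1 where "S1 = B (\<pi> w) \<union> B 0 \<union> B (\<pi> y)"
  define S2 where "S2 = B (\<pi> x) \<union> B 1 \<union> B (\<pi> z)"
  have BI: "\<And>i. i \<in> K24_V \<Longrightarrow> B i \<subseteq> V" "\<And>i. i \<in> K24_V \<Longrightarrow> connected_on E (B i)"
    using mB1 by simp_all
  have kV: "\<pi> w \<in> K24_V" "\<pi> x \<in> K24_V" "\<pi> y \<in> K24_V" "\<pi> z \<in> K24_V"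
    using KV(1) iK by simp_all
  have VV: "V \<subseteq> VH \<union> (\<Union>T\<in>{T. triangle EH T}. F T)" using assms(3) VW by simp
  have S1V: "S1 \<subseteq> VH \<union> (\<Union>T\<in>{T. triangle EH T}. F T)"
    using BI(1)[OF kV(1)] BI(1)[OF KV(2)] BI(1)[OF kV(3)] VV unfolding S1_def by blast
  have S2V: "S2 \<subseteq> VH \<union> (\<Union>T\<in>{T. triangle EH T}. F T)"
    using BI(1)[OF kV(2)] BI(1)[OF KV(3)] BI(1)[OF kV(4)] VV unfolding S2_def by blast
  have z0: "(0::nat) \<in> {0,1}" and o1: "(1::nat) \<in> {0,1}" by simp_all
  have r1: "(\<lambda>u v. u \<in> S1 \<and> v \<in> S1 \<and> {u, v} \<in> E)\<^sup>*\<^sup>* w y"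
  proof (rule chain3[OF BI(2)[OF kV(1)] BI(2)[OF KV(2)] BI(2)[OF kV(3)]])
    show "B (\<pi> w) \<subseteq> S1" "B 0 \<subseteq> S1" "B (\<pi> y) \<subseteq> S1" unfolding S1_def by blast+
    show "\<exists>u\<in>B (\<pi> w). \<exists>v\<in>B 0. {u, v} \<in> E" using mB3 KE[OF z0 iK(1)] by blast
    show "\<exists>u\<in>B 0. \<exists>v\<in>B (\<pi> y). {u, v} \<in> E" using mB3 KE[OF z0 iK(3)] by blast
  qed (use inB in simp_all)
  have r2: "(\<lambda>u v. u \<in> S2 \<and> v \<in> S2 \<and> {u, v} \<in> E)\<^sup>*\<^sup>* x z"
  proof (rule chain3[OF BI(2)[OF kV(2)] BI(2)[OF KV(3)] BI(2)[OF kV(4)]])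
    show "B (\<pi> x) \<subseteq> S2" "B 1 \<subseteq> S2" "B (\<pi> z) \<subseteq> S2" unfolding S2_def by blast+
    show "\<exists>u\<in>B (\<pi> x). \<exists>v\<in>B 1. {u, v} \<in> E" using mB3 KE[OF o1 iK(2)] by blast
    show "\<exists>u\<in>B 1. \<exists>v\<in>B (\<pi> z). {u, v} \<in> E" using mB3 KE[OF o1 iK(4)] by blast
  qed (use inB in simp_all)
  have h1: "(\<lambda>u v. u \<in> S1 \<inter> VH \<and> v \<in> S1 \<inter> VH \<and> {u, v} \<in> EH)\<^sup>*\<^sup>* w y"
    using reach_H[OF gr Fd Fdis EW assms(4) S1V r1 inVH(1)] inVH(3) by blast
  have h2: "(\<lambda>u v. u \<in> S2 \<inter> VH \<and> v \<in> S2 \<inter> VH \<and> {u, v} \<in> EH)\<^sup>*\<^sup>* x z"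
    using reach_H[OF gr Fd Fdis EW assms(4) S2V r2 inVH(2)] inVH(4) by blast
  obtain q1 where q1: "arc q1" "pathstart q1 = p w" "pathfinish q1 = p y"
     "\<forall>r\<in>path_image q1. \<exists>e\<in>EH. e \<subseteq> S1 \<and> r \<in> path_image (g e)"
    using get_arc[OF pemb gr h1 dist(2)] by blast
  obtain q2 where q2: "arc q2" "pathstart q2 = p x" "pathfinish q2 = p z"
     "\<forall>r\<in>path_image q2. \<exists>e\<in>EH. e \<subseteq> S2 \<and> r \<in> path_image (g e)"
    using get_arc[OF pemb gr h2 dist(5)] by blast
  have Ij: "\<And>i j. i \<in> {\<pi> w, 0, \<pi> y} \<Longrightarrow> j \<in> {\<pi> x, 1, \<pi> z} \<Longrightarrow> B i \<inter> B j = {}"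
  proof -
    fix i j assume i: "i \<in> {\<pi> w, 0, \<pi> y}" and j: "j \<in> {\<pi> x, 1, \<pi> z}"
    have "i \<in> K24_V" using i kV KV by blast
    moreover have "j \<in> K24_V" using j kV KV by blast
    moreover have "i \<noteq> j" using i j iK idist by auto
    ultimately show "B i \<inter> B j = {}" by (rule mB2)
  qed
  have S12: "S1 \<inter> S2 = {}"
  proof (rule ccontr)
    assume "S1 \<inter> S2 \<noteq> {}"
    then obtain r where r: "r \<in> S1" "r \<in> S2" by blast
    obtain i where i: "i \<in> {\<pi> w, 0, \<pi> y}" "r \<in> B i" using r(1) unfolding S1_def by blast
    obtain j where j: "j \<in> {\<pi> x, 1, \<pi> z}" "r \<in> B j" using r(2) unfolding S2_def by blast
    show False using Ij[OF i(1) j(1)] i(2) j(2) by blast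
  qed
  have nS: "x \<notin> S1" "z \<notin> S1" "w \<notin> S2" "y \<notin> S2"
    using S12 inB unfolding S1_def S2_def by blast+
  have yz: "y \<noteq> z" using dist by simp
  note o1 = oe_props[OF pemb ewx inVH(1) inVH(2) dist(1)]
  note o2 = oe_props[OF pemb exy inVH(2) inVH(3) dist(4)]
  note o3 = oe_props[OF pemb ewz inVH(1) inVH(4) dist(3)]
  note o4 = oe_props[OF pemb ezy inVH(4) inVH(3) yz[symmetric]]
  have injp: "inj_on p VH" using pemb unfolding plane_embedding_def by simp
  have pd: "p w \<noteq> p x" "p w \<noteq> p y" "p w \<noteq> p z" "p x \<noteq> p y" "p x \<noteq> p z" "p y \<noteq> p z"
    using injp inVH dist unfolding inj_on_def by metis+
  define c1 where "c1 = oe p g w x +++ oe p g x y"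
  define c2 where "c2 = oe p g w z +++ oe p g z y"
  have i12: "path_image (g {w,x}) \<inter> path_image (g {x,y}) \<subseteq> {p x}"
  proof
    fix r assume "r \<in> path_image (g {w,x}) \<inter> path_image (g {x,y})"
    then have "r \<in> p ` ({x,y} - {y})" using hit[OF pemb ewx exy, of y r] dist by blast
    then show "r \<in> {p x}" using dist by auto
  qed
  have i34: "path_image (g {w,z}) \<inter> path_image (g {z,y}) \<subseteq> {p z}"
  proof
    fix r assume "r \<in> path_image (g {w,z}) \<inter> path_image (g {z,y})"
    then have "r \<in> p ` ({z,y} - {y})" using hit[OF pemb ewz ezy, of y r] dist by blast
    then show "r \<in> {p z}" using dist by auto
  qed
  have ac1: "arc c1" unfolding c1_def by (rule arc_join) (use o1 o2 i12 in simp_all)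
  have ac2: "arc c2" unfolding c2_def by (rule arc_join) (use o3 o4 i34 in simp_all)
  have sc: "pathstart c1 = p w" "pathfinish c1 = p y" "pathstart c2 = p w" "pathfinish c2 = p y"
    unfolding c1_def c2_def using o1 o2 o3 o4 by simp_all
  have ic1: "path_image c1 = path_image (g {w,x}) \<union> path_image (g {x,y})"
    unfolding c1_def using o1 o2 by (simp add: path_image_join)
  have ic2: "path_image c2 = path_image (g {w,z}) \<union> path_image (g {z,y})"
    unfolding c2_def using o3 o4 by (simp add: path_image_join)
  have ex1: "{w,x} \<inter> {w,z} = {w}" "{w,x} \<inter> {z,y} = {}" "{x,y} \<inter> {w,z} = {}" "{x,y} \<inter> {z,y} = {y}"
    using dist by auto
  have ne1: "{w,x} \<noteq> {w,z}" "{w,x} \<noteq> {z,y}" "{x,y} \<noteq> {w,z}" "{x,y} \<noteq> {z,y}"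
    using dist by (auto simp: doubleton_eq_iff)
  have cr1: "path_image (g {w,x}) \<inter> path_image (g {w,z}) \<subseteq> {p w}"
    using crossE[OF pemb ewx ewz ne1(1)] unfolding ex1(1) by simp
  have cr2: "path_image (g {w,x}) \<inter> path_image (g {z,y}) \<subseteq> {}"
    using crossE[OF pemb ewx ezy ne1(2)] unfolding ex1(2) by simp
  have cr3: "path_image (g {x,y}) \<inter> path_image (g {w,z}) \<subseteq> {}"
    using crossE[OF pemb exy ewz ne1(3)] unfolding ex1(3) by simp
  have cr4: "path_image (g {x,y}) \<inter> path_image (g {z,y}) \<subseteq> {p y}"
    using crossE[OF pemb exy ezy ne1(4)] unfolding ex1(4) by simp
  have sp: "p w \<in> path_image c1" "p y \<in> path_image c1" "p w \<in> path_image c2" "p y \<in> path_image c2"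
    using sc pathstart_in_path_image pathfinish_in_path_image by metis+
  have c12: "path_image c1 \<inter> path_image c2 = {p w, p y}"
  proof
    show "path_image c1 \<inter> path_image c2 \<subseteq> {p w, p y}"
      unfolding ic1 ic2 using cr1 cr2 cr3 cr4 by blast
    show "{p w, p y} \<subseteq> path_image c1 \<inter> path_image c2" using sp by blast
  qed
  have q1K: "\<And>r. r \<in> path_image q1 \<Longrightarrow> r \<in> path_image c1 \<union> path_image c2 \<Longrightarrow> r \<in> {p w, p y}"
  proof -
    fix r assume r: "r \<in> path_image q1" "r \<in> path_image c1 \<union> path_image c2"
    obtain e where e: "e \<in> EH" "e \<subseteq> S1" "r \<in> path_image (g e)" using q1(4) r(1) by blast
    have xe: "x \<notin> e" "z \<notin> e" using e(2) nS by blast+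
    have "r \<in> path_image (g {w,x}) \<or> r \<in> path_image (g {x,y}) \<or> r \<in> path_image (g {w,z}) \<or> r \<in> path_image (g {z,y})"
      using r(2) unfolding ic1 ic2 by blast
    then show "r \<in> {p w, p y}"
    proof (elim disjE)
      assume h: "r \<in> path_image (g {w,x})"
      have "r \<in> p ` ({w,x} - {x})" by (rule hit[OF pemb e(1) ewx _ xe(1) e(3) h]) simp
      then show ?thesis using dist by auto
    next
      assume h: "r \<in> path_image (g {x,y})"
      have "r \<in> p ` ({x,y} - {x})" by (rule hit[OF pemb e(1) exy _ xe(1) e(3) h]) simp
      then show ?thesis using dist by auto
    next
      assume h: "r \<in> path_image (g {w,z})"
      have "r \<in> p ` ({w,z} - {z})" by (rule hit[OF pemb e(1) ewz _ xe(2) e(3) h]) simp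
      then show ?thesis using dist by auto
    next
      assume h: "r \<in> path_image (g {z,y})"
      have "r \<in> p ` ({z,y} - {z})" by (rule hit[OF pemb e(1) ezy _ xe(2) e(3) h]) simp
      then show ?thesis using dist by auto
    qed
  qed
  have q2K: "\<And>r. r \<in> path_image q2 \<Longrightarrow> r \<in> path_image c1 \<union> path_image c2 \<Longrightarrow> r \<in> {p x, p z}"
  proof -
    fix r assume r: "r \<in> path_image q2" "r \<in> path_image c1 \<union> path_image c2"
    obtain e where e: "e \<in> EH" "e \<subseteq> S2" "r \<in> path_image (g e)" using q2(4) r(1) by blast
    have xe: "w \<notin> e" "y \<notin> e" using e(2) nS by blast+
    have "r \<in> path_image (g {w,x}) \<or> r \<in> path_image (g {x,y}) \<or> r \<in> path_image (g {w,z}) \<or> r \<in> path_image (g {z,y})"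
      using r(2) unfolding ic1 ic2 by blast
    then show "r \<in> {p x, p z}"
    proof (elim disjE)
      assume h: "r \<in> path_image (g {w,x})"
      have "r \<in> p ` ({w,x} - {w})" by (rule hit[OF pemb e(1) ewx _ xe(1) e(3) h]) simp
      then show ?thesis using dist by auto
    next
      assume h: "r \<in> path_image (g {x,y})"
      have "r \<in> p ` ({x,y} - {y})" by (rule hit[OF pemb e(1) exy _ xe(2) e(3) h]) simp
      then show ?thesis using dist by auto
    next
      assume h: "r \<in> path_image (g {w,z})"
      have "r \<in> p ` ({w,z} - {w})" by (rule hit[OF pemb e(1) ewz _ xe(1) e(3) h]) simp
      then show ?thesis using dist by auto
    next
      assume h: "r \<in> path_image (g {z,y})"
      have "r \<in> p ` ({z,y} - {y})" by (rule hit[OF pemb e(1) ezy _ xe(2) e(3) h]) simp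
      then show ?thesis using dist by auto
    qed
  qed
  have qq: "path_image q1 \<inter> path_image q2 = {}"
  proof (rule ccontr)
    assume "path_image q1 \<inter> path_image q2 \<noteq> {}"
    then obtain r where r: "r \<in> path_image q1" "r \<in> path_image q2" by blast
    obtain e1 where e1: "e1 \<in> EH" "e1 \<subseteq> S1" "r \<in> path_image (g e1)" using q1(4) r(1) by blast
    obtain e2 where e2: "e2 \<in> EH" "e2 \<subseteq> S2" "r \<in> path_image (g e2)" using q2(4) r(2) by blast
    obtain u v where "u \<in> VH" "v \<in> VH" "e1 = {u,v}" using gr e1(1) unfolding graph_def by blast
    then have "u \<in> e1" by simp
    then have ne: "e1 \<noteq> e2" using e1(2) e2(2) S12 by blast
    have "r \<in> p ` (e1 \<inter> e2)" using crossE[OF pemb e1(1) e2(1) ne] e1(3) e2(3) by blast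
    moreover have "e1 \<inter> e2 = {}" using e1(2) e2(2) S12 by blast
    ultimately show False by simp
  qed
  define K where "K = path_image c1 \<union> path_image c2"
  define D where "D = drawing p g VH EH"
  have fK: "frontier f = K"
  proof -
    have e1: "{y,z} = {z,y}" "{z,w} = {w,z}" by (simp_all add: insert_commute)
    have abcd: "{a,b,c,d} = {w,x,y,z}" using wxyz by simp
    have m: "p w \<in> path_image (g {w,x})" "p x \<in> path_image (g {w,x})" "p y \<in> path_image (g {x,y})"
      "p z \<in> path_image (g {w,z})"
      using o1 o2 o3 pathstart_in_path_image pathfinish_in_path_image by metis+
    show ?thesis unfolding ff drawing_def K_def ic1 ic2 abcd e1 using m by auto
  qed
  have bK: "bounded K" unfolding K_def
    using compact_path_image[OF arc_imp_path[OF ac1]] compact_path_image[OF arc_imp_path[OF ac2]]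
    by (simp add: compact_imp_bounded)
  have KD: "K \<subseteq> D" unfolding K_def D_def ic1 ic2 drawing_def using ewx exy ewz ezy by blast
  have qD: "\<And>r q S. \<forall>r\<in>path_image q. \<exists>e\<in>EH. e \<subseteq> S \<and> r \<in> path_image (g e) \<Longrightarrow> r \<in> path_image q \<Longrightarrow> r \<in> D"
    unfolding D_def drawing_def by blast
  have fD: "f \<in> components (- D)" using f(1) unfolding D_def by simp
  have q1in: "path_image q1 - {p w, p y} \<subseteq> inside K"
  proof
    fix r assume r: "r \<in> path_image q1 - {p w, p y}"
    have "r \<in> D" using qD[OF q1(4)] r by blast
    moreover have "r \<notin> K" using q1K r unfolding K_def by blast
    ultimately show "r \<in> inside K" using face_inside[OF fD f(2) fK bK KD] by blast
  qed
  have q2in: "path_image q2 - {p x, p z} \<subseteq> inside K"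
  proof
    fix r assume r: "r \<in> path_image q2 - {p x, p z}"
    have "r \<in> D" using qD[OF q2(4)] r by blast
    moreover have "r \<notin> K" using q2K r unfolding K_def by blast
    ultimately show "r \<in> inside K" using face_inside[OF fD f(2) fK bK KD] by blast
  qed
  have c1q: "path_image c1 \<inter> path_image q1 = {p w, p y}"
  proof
    show "path_image c1 \<inter> path_image q1 \<subseteq> {p w, p y}" using q1K by blast
    show "{p w, p y} \<subseteq> path_image c1 \<inter> path_image q1"
      using sp q1(2,3) pathstart_in_path_image[of q1] pathfinish_in_path_image[of q1] by auto
  qed
  have c2q: "path_image c2 \<inter> path_image q1 = {p w, p y}"
  proof
    show "path_image c2 \<inter> path_image q1 \<subseteq> {p w, p y}" using q1K by blast
    show "{p w, p y} \<subseteq> path_image c2 \<inter> path_image q1"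
      using sp q1(2,3) pathstart_in_path_image[of q1] pathfinish_in_path_image[of q1] by auto
  qed
  have Xc: "p x \<in> path_image c1"
  proof -
    have "pathfinish (oe p g w x) \<in> path_image (oe p g w x)" by (rule pathfinish_in_path_image)
    then show ?thesis using o1 ic1 by simp
  qed
  have Zc: "p z \<in> path_image c2"
  proof -
    have "pathfinish (oe p g w z) \<in> path_image (oe p g w z)" by (rule pathfinish_in_path_image)
    then show ?thesis using o3 ic2 by simp
  qed
  have XZ: "p x \<notin> {p w, p y}" "p z \<notin> {p w, p y}" using pd by auto
  show False
    by (rule crossing[OF ac1 ac2 q1(1) q2(1) sc q1(2) q1(3) pd(2) c12 c1q c2q q2(2) q2(3)
          Xc XZ(1) Zc XZ(2) qq q2in[unfolded K_def] q1in[unfolded K_def]])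
qed


end
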